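(* Let $\{f_t\}_{t\in[0,1]}$ be a generic one-parameter PL family on a $d$-dimensional combinatorial manifold with triangulation $K$ and vertex set $V$. Let $u,v\in V$ be distinct vertices and $0\le t_1<t_2\le 1$ be such that the vertex curves of $u$ and $v$ cross in the open interval $(t_1,t_2)$, i.e. $f_{t_1}(v)>f_{t_1}(u)$, $f_{t_2}(v)<f_{t_2}(u)$, and the curves $t\mapsto f_t(u)$ and $t\mapsto f_t(v)$ intersect exactly once in $(t_1,t_2)$. Assume further that no other pair of vertex curves intersects at any time in $[t_1,t_2]$. Then \[ \sum_{i=0}^{d}(-1)^i\bigl(\beta_i^{t_2}(v)-\beta_i^{t_1}(v)\bigr)\;=\;-\sum_{i=0}^{d}(-1)^i\bigl(\beta_i^{t_2}(u)-\beta_i^{t_1}(u)\bigr). \]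
   Context: A combinatorial manifold of dimension $d$ is a finite simplicial complex $K$ triangulating a manifold $\mathbb{M}$ such that the link of every vertex is homeomorphic to a $(d-1)$-sphere. A PL function on $\mathbb{M}$ is given by assigning real values to the vertices of $K$ and extending linearly on each simplex. A one-parameter PL family $\{f_t\}_{t\in[0,1]}$ assigns to each $t$ a PL function $f_t$ on $K$, with each vertex curve $t\mapsto f_t(w)$ ($w\in V$) continuous (in practice piecewise linear in $t$). The family is generic if the collection of vertex curves $\{(t,f_t(w)) : t\in[0,1]\}$, $w\in V$, has only finitely many intersection points, each an intersection of exactly two curves, occurring at pairwise distinct times $0<T_1<\dots<T_n<1$, with no point where three or more curves meet. For a vertex $w$, $\mathrm{St}(w)=\{\sigma\in K: w\in\sigma\}$ and $\mathrm{Lk}(w)=\{\tau\in K:\exists\sigma\in\mathrm{St}(w),\ \tau\subset\sigma,\ w\notin\tau\}$. The lower link of $w$ at time $t$ is $\mathrm{Lk}_t^-(w)=\{\tau\in\mathrm{Lk}(w): f_t(x)\le f_t(w)\text{ for all vertices } x \text{ of } \tau\}$. The time-varying Betti numbers are $\beta_i^t(w)=\dim_{\mathbb{R}}\widetilde H_{i-1}(\mathrm{Lk}_t^-(w);\mathbb{R})$ for $i=0,\dots,d$, where $\widetilde H$ is reduced simplicial homology with the convention $\widetilde H_{-1}(X;\mathbb{R})=0$ if $X\neq\emptyset$ and $\widetilde H_{-1}(\emptyset;\mathbb{R})=\mathbb{R}$. *)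

theory Defs
  imports "HOL-Analysis.Analysis" "HOL-Library.Function_Algebras"
begin

definition simplicial_complex :: "'v set set \<Rightarrow> bool" where
  "simplicial_complex K \<longleftrightarrow> finite K \<and>
     (\<forall>\<sigma>\<in>K. finite \<sigma> \<and> \<sigma> \<noteq> {}) \<and>
     (\<forall>\<sigma>\<in>K. \<forall>\<tau>. \<tau> \<subseteq> \<sigma> \<and> \<tau> \<noteq> {} \<longrightarrow> \<tau> \<in> K)"

definition vertices :: "'v set set \<Rightarrow> 'v set" where
  "vertices K = {w. {w} \<in> K}"

definition star :: "'v set set \<Rightarrow> 'v \<Rightarrow> 'v set set" where
  "star K w = {\<sigma>\<in>K. w \<in> \<sigma>}"

definition link :: "'v set set \<Rightarrow> 'v \<Rightarrow> 'v set set" where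
  "link K w = {\<tau>. \<tau> \<noteq> {} \<and> (\<exists>\<sigma>\<in>star K w. \<tau> \<subseteq> \<sigma> \<and> w \<notin> \<tau>)}"

definition geom_simplex :: "'v set \<Rightarrow> ('v \<Rightarrow> real) set" where
  "geom_simplex \<sigma> = {x. (\<forall>i. 0 \<le> x i) \<and> (\<forall>i. i \<notin> \<sigma> \<longrightarrow> x i = 0) \<and> sum x \<sigma> = 1}"

definition realization :: "'v set set \<Rightarrow> ('v \<Rightarrow> real) topology" where
  "realization L = subtopology (powertop_real UNIV) (\<Union>\<sigma>\<in>L. geom_simplex \<sigma>)"

text \<open>X is homeomorphic to the (d-1)-sphere; for d = 0 the (-1)-sphere is empty.\<close>
definition is_sphere :: "nat \<Rightarrow> 'a topology \<Rightarrow> bool" where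
  "is_sphere d X \<longleftrightarrow> (if d = 0 then topspace X = {} else X homeomorphic_space nsphere (d - 1))"

definition combinatorial_manifold :: "nat \<Rightarrow> 'v set set \<Rightarrow> bool" where
  "combinatorial_manifold d K \<longleftrightarrow> simplicial_complex K \<and>
     (\<forall>w\<in>vertices K. is_sphere d (realization (link K w)))"

text \<open>Augmented chain complex: the empty simplex is the unique (-1)-simplex.
  Chains of level j are real functions supported on simplices with j vertices
  (i.e. of dimension j-1). Orientation is induced by the linear order on vertices.\<close>

definition chains :: "'v set set \<Rightarrow> nat \<Rightarrow> ('v set \<Rightarrow> real) set" where
  "chains X j = {c. \<forall>\<sigma>. c \<sigma> \<noteq> 0 \<longrightarrow> \<sigma> \<in> insert {} X \<and> card \<sigma> = j}"

definition bdry :: "'v::linorder set set \<Rightarrow> ('v set \<Rightarrow> real) \<Rightarrow> ('v set \<Rightarrow> real)" where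
  "bdry X c = (\<lambda>\<tau>. \<Sum>x\<in>(\<Union>X) - \<tau>.
      (-1) ^ card {y\<in>insert x \<tau>. y < x} * c (insert x \<tau>))"

definition rscale :: "real \<Rightarrow> ('v set \<Rightarrow> real) \<Rightarrow> ('v set \<Rightarrow> real)" where
  "rscale r c = (\<lambda>\<sigma>. r * c \<sigma>)"

text \<open>dim of reduced homology in degree j-1: dim (ker \<partial>_j / im \<partial>_(j+1)),
  written as dim ker - dim im (the image lies in the kernel).\<close>
definition reduced_betti :: "'v::linorder set set \<Rightarrow> nat \<Rightarrow> nat" where
  "reduced_betti X j =
     vector_space.dim rscale {c \<in> chains X j. bdry X c = 0}
     - vector_space.dim rscale (bdry X ` chains X (Suc j))"

text \<open>A PL function is determined by its vertex values; F t w = f_t(w).\<close>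

definition lower_link :: "'v set set \<Rightarrow> (real \<Rightarrow> 'v \<Rightarrow> real) \<Rightarrow> real \<Rightarrow> 'v \<Rightarrow> 'v set set" where
  "lower_link K F t w = {\<tau>\<in>link K w. \<forall>x\<in>\<tau>. F t x \<le> F t w}"

text \<open>beta_i^t(w) = dim H~_(i-1)(Lk_t^-(w)); level i chains are (i-1)-simplices.\<close>
definition betti_t :: "'v::linorder set set \<Rightarrow> (real \<Rightarrow> 'v \<Rightarrow> real) \<Rightarrow> real \<Rightarrow> 'v \<Rightarrow> nat \<Rightarrow> nat" where
  "betti_t K F t w i = reduced_betti (lower_link K F t w) i"

definition PL_family :: "'v set set \<Rightarrow> (real \<Rightarrow> 'v \<Rightarrow> real) \<Rightarrow> bool" where
  "PL_family K F \<longleftrightarrow> (\<forall>w\<in>vertices K. continuous_on {0..1} (\<lambda>t. F t w))"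

definition generic_family :: "'v set set \<Rightarrow> (real \<Rightarrow> 'v \<Rightarrow> real) \<Rightarrow> bool" where
  "generic_family K F \<longleftrightarrow> PL_family K F \<and>
     finite {(t, F t a) | t a b. t \<in> {0..1} \<and> a \<in> vertices K \<and> b \<in> vertices K \<and> a \<noteq> b \<and> F t a = F t b} \<and>
     (\<forall>t\<in>{0..1}. \<forall>a\<in>vertices K. \<forall>b\<in>vertices K. a \<noteq> b \<and> F t a = F t b \<longrightarrow>
        0 < t \<and> t < 1 \<and>
        (\<forall>a'\<in>vertices K. \<forall>b'\<in>vertices K. a' \<noteq> b' \<and> F t a' = F t b' \<longrightarrow> {a', b'} = {a, b}))"

end

theory Submission
  imports Defs "HOL-Homology.Invariance_of_Domain"
begin


lemma sum_fun_app: "(sum f A) x = (\<Sum>a\<in>A. f a x)"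
  by (induction A rule: infinite_finite_induct) auto

interpretation RS: vector_space rscale
  by unfold_locales (auto simp: rscale_def algebra_simps fun_eq_iff)

lemma rank_nullity:
  fixes f :: "('v set \<Rightarrow> real) \<Rightarrow> ('v set \<Rightarrow> real)"
  assumes add: "\<And>x y. f (x + y) = f x + f y" and sc: "\<And>a x. f (rscale a x) = rscale a (f x)"
    and S: "RS.subspace S" and fin: "finite W" and SW: "S \<subseteq> RS.span W"
  shows "RS.dim S = RS.dim {x\<in>S. f x = 0} + RS.dim (f ` S)"
proof -
  have lin: "Vector_Spaces.linear rscale rscale f"
    using add sc by (simp add: Vector_Spaces.linear_iff RS.vector_space_axioms)
  interpret L: Vector_Spaces.linear rscale rscale f by (rule lin)
  define N where "N = {x\<in>S. f x = 0}"
  obtain A where A: "A \<subseteq> N" "RS.independent A" "N \<subseteq> RS.span A" "card A = RS.dim N"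
    using RS.basis_exists by blast
  have AS: "A \<subseteq> S" using A(1) N_def by auto
  obtain B where B: "A \<subseteq> B" "B \<subseteq> S" "RS.independent B" "S \<subseteq> RS.span B"
    using RS.maximal_independent_subset_extend[OF AS A(2)] by blast
  have finB: "finite B"
    using RS.independent_span_bound[OF fin B(3)] B(2) SW by blast
  have dS: "RS.dim S = card B"
    using RS.basis_card_eq_dim[OF B(2) B(4) B(3)] by simp
  define C where "C = B - A"
  have finA: "finite A" "finite C" using finB B(1) C_def finite_subset by auto
  have cB: "card B = card A + card C"
    unfolding C_def using finB B(1) by (metis card_Diff_subset finA(1) card_mono le_add_diff_inverse)
  have spB: "RS.span B = S" using RS.span_subspace[OF B(2) B(4) S] .
  have disj: "x = 0" if xA: "x \<in> RS.span A" and xC: "x \<in> RS.span C" for x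
  proof -
    obtain u where u: "x = (\<Sum>v\<in>A. rscale (u v) v)"
      using xA RS.span_finite[OF finA(1)] by auto
    obtain w where w: "x = (\<Sum>v\<in>C. rscale (w v) v)"
      using xC RS.span_finite[OF finA(2)] by auto
    define z where "z b = (if b \<in> A then u b else - w b)" for b
    have "(\<Sum>v\<in>B. rscale (z v) v) = (\<Sum>v\<in>A. rscale (z v) v) + (\<Sum>v\<in>C. rscale (z v) v)"
      unfolding C_def using sum.subset_diff[OF B(1) finB, of "\<lambda>v. rscale (z v) v"] by (simp add: add.commute)
    also have "(\<Sum>v\<in>A. rscale (z v) v) = x" unfolding u z_def by (rule sum.cong) auto
    also have "(\<Sum>v\<in>C. rscale (z v) v) = (\<Sum>v\<in>C. rscale (- w v) v)"
      unfolding z_def C_def by (rule sum.cong) auto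
    also have "\<dots> = - x" unfolding w
      by (simp add: rscale_def fun_eq_iff sum_fun_app sum_negf)
    finally have "(\<Sum>v\<in>B. rscale (z v) v) = 0" by (simp add: fun_eq_iff)
    then have "\<forall>v\<in>A. z v = 0"
      using B(3) B(1) finB RS.independentD[of B B z] by blast
    then have "\<forall>v\<in>A. u v = 0" unfolding z_def by simp
    then show ?thesis unfolding u by (simp add: rscale_def fun_eq_iff sum_fun_app)
  qed
  have spCS: "RS.span C \<subseteq> S"
    using RS.span_minimal[of C S] S B(2) C_def by auto
  have inj: "inj_on f (RS.span C)"
  proof -
    have "\<forall>x\<in>RS.span C. f x = 0 \<longrightarrow> x = 0"
    proof (intro ballI impI)
      fix x assume "x \<in> RS.span C" "f x = 0"
      then have "x \<in> N" using spCS N_def by auto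
      then show "x = 0" using A(3) disj \<open>x \<in> RS.span C\<close> by auto
    qed
    then show ?thesis using L.inj_on_iff_eq_0[OF RS.subspace_span] by blast
  qed
  have indC: "RS.independent C" using RS.independent_mono[OF B(3)] C_def by auto
  have indfC: "RS.independent (f ` C)"
    using L.independent_injective_image[OF indC inj] .
  have cfC: "card (f ` C) = card C"
    using card_image inj_on_subset[OF inj RS.span_superset] by blast
  have "f ` S = RS.span (f ` B)" using L.span_image spB by simp
  also have "RS.span (f ` B) = RS.span (f ` C)"
  proof -
    have "f ` A \<subseteq> {0}" using A(1) N_def by auto
    then have "f ` B \<subseteq> insert 0 (f ` C)" using C_def by auto
    then have "RS.span (f ` B) \<subseteq> RS.span (f ` C)"
      by (metis RS.span_insert_0 RS.span_mono RS.span_span RS.span_superset subset_trans)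
    moreover have "RS.span (f ` C) \<subseteq> RS.span (f ` B)"
      by (rule RS.span_mono) (auto simp: C_def)
    ultimately show ?thesis by blast
  qed
  finally have "RS.dim (f ` S) = card C"
    using RS.dim_span_eq_card_independent[OF indfC] cfC by simp
  then show ?thesis using dS cB A(4) N_def by simp
qed


definition simps_of :: "'v set set \<Rightarrow> nat \<Rightarrow> 'v set set" where
  "simps_of X j = {\<sigma>\<in>insert {} X. card \<sigma> = j}"

definition delta :: "'v set \<Rightarrow> ('v set \<Rightarrow> real)" where
  "delta \<sigma> = (\<lambda>\<tau>. if \<tau> = \<sigma> then 1 else 0)"

lemma finite_simps_of: "finite X \<Longrightarrow> finite (simps_of X j)"
proof -
  assume "finite X"
  moreover have "simps_of X j \<subseteq> insert {} X" unfolding simps_of_def by blast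
  ultimately show ?thesis using finite_subset finite_insert by blast
qed

lemma chains_subspace: "RS.subspace (chains (X::'v set set) j)"
  unfolding RS.subspace_def
proof (intro conjI ballI allI)
  show "0 \<in> chains X j" unfolding chains_def by simp
next
  fix x y :: "'v set \<Rightarrow> real"
  assume x: "x \<in> chains X j" and y: "y \<in> chains X j"
  show "x + y \<in> chains X j"
    unfolding chains_def
  proof (intro CollectI allI impI)
    fix \<sigma> assume "(x + y) \<sigma> \<noteq> 0"
    then have "x \<sigma> \<noteq> 0 \<or> y \<sigma> \<noteq> 0" by auto
    then show "\<sigma> \<in> insert {} X \<and> card \<sigma> = j" using x y unfolding chains_def by blast
  qed
next
  fix c :: real and x :: "'v set \<Rightarrow> real"
  assume x: "x \<in> chains X j"
  show "rscale c x \<in> chains X j"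
    unfolding chains_def
  proof (intro CollectI allI impI)
    fix \<sigma> assume "rscale c x \<sigma> \<noteq> 0"
    then have "x \<sigma> \<noteq> 0" unfolding rscale_def by auto
    then show "\<sigma> \<in> insert {} X \<and> card \<sigma> = j" using x unfolding chains_def by blast
  qed
qed

lemma delta_in_chains: "delta ` simps_of X j \<subseteq> chains X j"
proof
  fix c assume "c \<in> delta ` simps_of X j"
  then obtain \<sigma> where s: "\<sigma> \<in> simps_of X j" and c: "c = delta \<sigma>" by blast
  show "c \<in> chains X j"
    unfolding chains_def
  proof (intro CollectI allI impI)
    fix \<tau> assume "c \<tau> \<noteq> 0"
    then have "\<tau> = \<sigma>" unfolding c delta_def by (cases "\<tau> = \<sigma>") auto
    then show "\<tau> \<in> insert {} X \<and> card \<tau> = j" using s unfolding simps_of_def by blast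
  qed
qed

lemma chains_eq_span:
  assumes "finite X"
  shows "chains X j = RS.span (delta ` simps_of X j)"
proof
  show "RS.span (delta ` simps_of X j) \<subseteq> chains X j"
    using RS.span_minimal[OF delta_in_chains chains_subspace] .
  show "chains X j \<subseteq> RS.span (delta ` simps_of X j)"
  proof
    fix c assume c: "c \<in> chains X j"
    have "c = (\<Sum>\<sigma>\<in>simps_of X j. rscale (c \<sigma>) (delta \<sigma>))"
    proof
      fix \<tau>
      have "(\<Sum>\<sigma>\<in>simps_of X j. rscale (c \<sigma>) (delta \<sigma>)) \<tau>
          = (\<Sum>\<sigma>\<in>simps_of X j. if \<sigma> = \<tau> then c \<tau> else 0)"
        unfolding sum_fun_app rscale_def delta_def by (rule sum.cong) auto
      also have "\<dots> = c \<tau>"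
        using c finite_simps_of[OF assms, of j] unfolding chains_def simps_of_def
        by (auto simp: sum.delta)
      finally show "c \<tau> = (\<Sum>\<sigma>\<in>simps_of X j. rscale (c \<sigma>) (delta \<sigma>)) \<tau>" by simp
    qed
    also have "\<dots> \<in> RS.span (delta ` simps_of X j)"
      by (intro RS.span_sum RS.span_scale RS.span_base) auto
    finally show "c \<in> RS.span (delta ` simps_of X j)" .
  qed
qed

lemma delta_independent: "RS.independent (delta ` A)"
  unfolding RS.independent_explicit_module
proof (intro allI impI)
  fix t u v
  assume t: "finite t" "t \<subseteq> delta ` A" and s: "(\<Sum>v\<in>t. rscale (u v) v) = 0" and v: "v \<in> t"
  obtain \<sigma> where \<sigma>: "v = delta \<sigma>" using t v by auto
  have "0 = (\<Sum>w\<in>t. rscale (u w) w) \<sigma>" using s by simp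
  also have "\<dots> = (\<Sum>w\<in>t. if w = v then u w else 0)"
    unfolding sum_fun_app
  proof (rule sum.cong)
    fix w assume "w \<in> t"
    then obtain \<rho> where \<rho>: "w = delta \<rho>" using t by auto
    have "w = v \<longleftrightarrow> \<rho> = \<sigma>" unfolding \<rho> \<sigma> delta_def by (auto simp: fun_eq_iff)
    then show "rscale (u w) w \<sigma> = (if w = v then u w else 0)"
      unfolding rscale_def using \<rho> by (auto simp: delta_def)
  qed simp
  also have "\<dots> = u v" using t v by (simp add: sum.delta)
  finally show "u v = 0" by simp
qed

lemma delta_inj: "inj delta"
  unfolding inj_def delta_def by (metis (full_types) zero_neq_one)

lemma dim_chains:
  assumes "finite X"
  shows "RS.dim (chains X j) = card (simps_of X j)"
proof -
  have "RS.dim (chains X j) = RS.dim (delta ` simps_of X j)"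
    using chains_eq_span[OF assms] RS.dim_span by metis
  also have "\<dots> = card (delta ` simps_of X j)"
    using RS.dim_eq_card_independent[OF delta_independent] .
  also have "\<dots> = card (simps_of X j)"
    using card_image delta_inj inj_on_subset by blast
  finally show ?thesis .
qed

lemma bdry_add: "bdry X (c + e) = bdry X c + bdry X e"
  unfolding bdry_def by (auto simp: fun_eq_iff sum.distrib distrib_left)

lemma bdry_scale: "bdry X (rscale a c) = rscale a (bdry X c)"
  unfolding bdry_def rscale_def by (auto simp: fun_eq_iff sum_distrib_left ac_simps)


lemma antisym_sum_zero:
  fixes G :: "'a \<Rightarrow> 'a \<Rightarrow> real"
  assumes fin: "finite V" and anti: "\<And>x y. x \<in> V \<Longrightarrow> y \<in> V \<Longrightarrow> x \<noteq> y \<Longrightarrow> G x y = - G y x"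
  shows "(\<Sum>x\<in>V. \<Sum>y\<in>V-{x}. G x y) = 0"
proof -
  define H where "H x y = (if x \<noteq> y then G x y else 0)" for x y
  have e1: "(\<Sum>x\<in>V. \<Sum>y\<in>V-{x}. G x y) = (\<Sum>x\<in>V. \<Sum>y\<in>V. H x y)"
  proof (rule sum.cong)
    fix x assume "x \<in> V"
    have "V - {x} = {y\<in>V. x \<noteq> y}" by auto
    then show "(\<Sum>y\<in>V-{x}. G x y) = (\<Sum>y\<in>V. H x y)"
      unfolding H_def using sum.inter_filter[OF fin, of "G x" "\<lambda>y. x \<noteq> y"] by simp
  qed simp
  have e2: "(\<Sum>x\<in>V. \<Sum>y\<in>V. H x y) = (\<Sum>y\<in>V. \<Sum>x\<in>V. H x y)" by (rule sum.swap)
  have hh: "H x y = - H y x" if "x \<in> V" "y \<in> V" for x y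
    using anti[OF that] unfolding H_def by auto
  have e3: "(\<Sum>y\<in>V. \<Sum>x\<in>V. H x y) = (\<Sum>y\<in>V. \<Sum>x\<in>V. - H y x)"
    by (intro sum.cong refl) (use hh in blast)
  also have "\<dots> = - (\<Sum>y\<in>V. \<Sum>x\<in>V. H y x)" by (simp add: sum_negf)
  finally have e3: "(\<Sum>y\<in>V. \<Sum>x\<in>V. H x y) = - (\<Sum>y\<in>V. \<Sum>x\<in>V. H y x)" .
  show ?thesis using e1 e2 e3 by linarith
qed

lemma card_less_insert2:
  fixes x y :: "'v::linorder"
  assumes "finite \<tau>" "x \<notin> \<tau>" "x \<noteq> y"
  shows "card {z\<in>insert y (insert x \<tau>). z < y} = card {z\<in>\<tau>. z < y} + (if x < y then 1 else 0)"
proof -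
  have "{z\<in>insert y (insert x \<tau>). z < y} = (if x < y then insert x {z\<in>\<tau>. z < y} else {z\<in>\<tau>. z < y})"
    by auto
  then show ?thesis using assms by auto
qed

lemma card_less_insert1:
  fixes x :: "'v::linorder"
  shows "{z\<in>insert x \<tau>. z < x} = {z\<in>\<tau>. z < x}"
  by auto

lemma bdry_bdry:
  fixes X :: "'v::linorder set set"
  assumes fU: "finite (\<Union>X)" and cf: "\<And>\<sigma>. c \<sigma> \<noteq> 0 \<Longrightarrow> finite \<sigma>"
  shows "bdry X (bdry X c) = 0"
proof (rule ext)
  fix \<tau> :: "'v set"
  show "bdry X (bdry X c) \<tau> = 0 \<tau>"
  proof (cases "finite \<tau>")
    case False
    then have "c (insert y (insert x \<tau>)) = 0" for x y
      using cf False by (meson finite_insert)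
    then show ?thesis unfolding bdry_def by simp
  next
    case True
    define V where "V = \<Union>X - \<tau>"
    define s where "s (x::'v) T = (-1::real) ^ card {y\<in>insert x T. y < x}" for x T
    define G where "G x y = s x \<tau> * (s y (insert x \<tau>) * c (insert y (insert x \<tau>)))" for x y
    have "bdry X (bdry X c) \<tau> = (\<Sum>x\<in>V. \<Sum>y\<in>V-{x}. G x y)"
      unfolding bdry_def[of X "bdry X c"] G_def s_def V_def
    proof (rule sum.cong[OF refl])
      fix x assume "x \<in> \<Union>X - \<tau>"
      have e: "\<Union>X - insert x \<tau> = \<Union>X - \<tau> - {x}" by auto
      show "(-1) ^ card {y \<in> insert x \<tau>. y < x} * bdry X c (insert x \<tau>) =
         (\<Sum>y\<in>\<Union> X - \<tau> - {x}. (-1) ^ card {y \<in> insert x \<tau>. y < x} *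
               ((-1) ^ card {ya \<in> insert y (insert x \<tau>). ya < y} * c (insert y (insert x \<tau>))))"
        unfolding bdry_def e by (simp only: sum_distrib_left)
    qed
    also have "\<dots> = 0"
    proof (rule antisym_sum_zero)
      show "finite V" using fU V_def by auto
      fix x y assume xy: "x \<in> V" "y \<in> V" "x \<noteq> y"
      have xt: "x \<notin> \<tau>" "y \<notin> \<tau>" using xy V_def by auto
      have s1: "s x \<tau> = (-1) ^ card {z\<in>\<tau>. z < x}" "s y \<tau> = (-1) ^ card {z\<in>\<tau>. z < y}"
        unfolding s_def card_less_insert1 by simp_all
      have s2: "s y (insert x \<tau>) = (-1) ^ card {z\<in>\<tau>. z < y} * (if x < y then -1 else 1)"
        unfolding s_def using card_less_insert2[OF True xt(1) xy(3)] by auto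
      have s3: "s x (insert y \<tau>) = (-1) ^ card {z\<in>\<tau>. z < x} * (if y < x then -1 else 1)"
        unfolding s_def using card_less_insert2[OF True xt(2)] xy(3) by auto
      have ins: "insert y (insert x \<tau>) = insert x (insert y \<tau>)" by auto
      show "G x y = - G y x"
      proof -
        have "x < y \<or> y < x" using xy(3) by auto
        then show ?thesis unfolding G_def s1 s2 s3 ins by auto
      qed
    qed
    finally show ?thesis by simp
  qed
qed



lemma sc_fin: "simplicial_complex X \<Longrightarrow> finite X"
  unfolding simplicial_complex_def by blast
lemma sc_simp_fin: "simplicial_complex X \<Longrightarrow> \<sigma> \<in> X \<Longrightarrow> finite \<sigma>"
  unfolding simplicial_complex_def by blast
lemma sc_simp_ne: "simplicial_complex X \<Longrightarrow> \<sigma> \<in> X \<Longrightarrow> \<sigma> \<noteq> {}"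
  unfolding simplicial_complex_def by blast
lemma sc_closed: "simplicial_complex X \<Longrightarrow> \<sigma> \<in> X \<Longrightarrow> \<tau> \<subseteq> \<sigma> \<Longrightarrow> \<tau> \<noteq> {} \<Longrightarrow> \<tau> \<in> X"
  unfolding simplicial_complex_def by blast
lemma sc_union_fin: "simplicial_complex X \<Longrightarrow> finite (\<Union>X)"
  using sc_fin sc_simp_fin by blast

lemma bdry_chains:
  assumes X: "simplicial_complex X" and c: "c \<in> chains X (Suc j)"
  shows "bdry X c \<in> chains X j"
proof -
  have cc: "\<And>\<sigma>. c \<sigma> \<noteq> 0 \<Longrightarrow> \<sigma> \<in> insert {} X \<and> card \<sigma> = Suc j"
    using c unfolding chains_def by blast
  have "\<tau> \<in> insert {} X \<and> card \<tau> = j" if nz: "bdry X c \<tau> \<noteq> 0" for \<tau>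
  proof -
    from nz have "(\<Sum>x\<in>\<Union>X - \<tau>. (-1) ^ card {y\<in>insert x \<tau>. y < x} * c (insert x \<tau>)) \<noteq> 0"
      unfolding bdry_def by simp
    then obtain x where x: "x \<in> \<Union>X - \<tau>" and cx0: "(-1::real) ^ card {y\<in>insert x \<tau>. y < x} * c (insert x \<tau>) \<noteq> 0"
      by (rule sum.not_neutral_contains_not_neutral)
    from cx0 have cx: "c (insert x \<tau>) \<noteq> 0" by (metis mult_zero_right)
    from cc[OF cx] have i1: "insert x \<tau> \<in> insert {} X" and i2: "card (insert x \<tau>) = Suc j" by blast+
    from i1 have ix: "insert x \<tau> \<in> X" by blast
    have fin: "finite (insert x \<tau>)" using sc_simp_fin[OF X ix] .
    have xt: "x \<notin> \<tau>" using x by blast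
    have t1: "\<tau> \<in> insert {} X"
    proof (cases "\<tau> = {}")
      case False
      then show ?thesis using sc_closed[OF X ix, of \<tau>] by blast
    qed simp
    have "card (insert x \<tau>) = Suc (card \<tau>)" using fin xt by simp
    then have "card \<tau> = j" using i2 by simp
    then show ?thesis using t1 by blast
  qed
  then show ?thesis unfolding chains_def by blast
qed

lemma bdry_chains0:
  assumes X: "simplicial_complex X" and c: "c \<in> chains X 0"
  shows "bdry X c = 0"
proof (rule ext)
  fix \<tau>
  have "c (insert x \<tau>) = 0" for x
  proof (rule ccontr)
    assume "c (insert x \<tau>) \<noteq> 0"
    then have "insert x \<tau> \<in> X" "card (insert x \<tau>) = 0" using c unfolding chains_def by auto
    then show False using sc_simp_fin[OF X] by fastforce
  qed
  then show "bdry X c \<tau> = 0 \<tau>" unfolding bdry_def by simp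
qed

lemma chains_finite_support:
  assumes X: "simplicial_complex X" and c: "c \<in> chains X j" and "c \<sigma> \<noteq> 0"
  shows "finite \<sigma>"
  using assms sc_simp_fin[OF X] unfolding chains_def by blast

lemma dim_zero_set: "RS.dim {0 :: 'v set \<Rightarrow> real} = 0"
proof -
  have "RS.dim {0 :: 'v set \<Rightarrow> real} = RS.dim (RS.span ({} :: ('v set \<Rightarrow> real) set))" by simp
  also have "\<dots> = RS.dim ({} :: ('v set \<Rightarrow> real) set)" by (rule RS.dim_span)
  also have "\<dots> = 0" using RS.dim_eq_card_independent[OF RS.independent_empty] by simp
  finally show ?thesis .
qed

lemma telescope:
  fixes z r :: "nat \<Rightarrow> real"
  shows "(\<Sum>i\<le>d. (-1)^i * (z i - r (Suc i))) = (\<Sum>i\<le>d. (-1)^i * (z i + r i)) - r 0 - (-1)^d * r (Suc d)"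
  by (induction d) (auto simp: algebra_simps)

lemma euler_poincare:
  fixes X :: "'v::linorder set set"
  assumes X: "simplicial_complex X" and bd: "\<forall>\<sigma>\<in>X. card \<sigma> \<le> d"
  shows "(\<Sum>i\<le>d. (-1::real)^i * real (reduced_betti X i))
       = (\<Sum>i\<le>d. (-1::real)^i * real (card (simps_of X i)))"
proof -
  have finX: "finite X" using sc_fin[OF X] .
  have fU: "finite (\<Union>X)" using sc_union_fin[OF X] .
  define Z where "Z i = {c \<in> chains X i. bdry X c = 0}" for i
  define z where "z i = RS.dim (Z i)" for i
  define r where "r i = RS.dim (bdry X ` chains X i)" for i
  have rn: "card (simps_of X i) = z i + r i" for i
  proof -
    have "RS.dim (chains X i) = RS.dim {x \<in> chains X i. bdry X x = 0} + RS.dim (bdry X ` chains X i)"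
      by (rule rank_nullity[OF bdry_add bdry_scale chains_subspace finite_imageI[OF finite_simps_of[OF finX, of i], of delta]])
         (simp add: chains_eq_span[OF finX])
    then show ?thesis using dim_chains[OF finX] unfolding z_def r_def Z_def by simp
  qed
  have rz: "r (Suc i) \<le> z i" for i
  proof -
    obtain W where W: "W \<subseteq> Z i" "RS.independent W" "Z i \<subseteq> RS.span W" "card W = z i"
      using RS.basis_exists unfolding z_def by blast
    have "W \<subseteq> RS.span (delta ` simps_of X i)"
      using W(1) chains_eq_span[OF finX] unfolding Z_def by auto
    then have fW: "finite W"
      using RS.independent_span_bound[OF finite_imageI[OF finite_simps_of[OF finX, of i], of delta] W(2)] by blast
    have "bdry X ` chains X (Suc i) \<subseteq> Z i"
    proof
      fix e assume "e \<in> bdry X ` chains X (Suc i)"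
      then obtain c where c: "c \<in> chains X (Suc i)" "e = bdry X c" by auto
      have "bdry X (bdry X c) = 0"
        by (rule bdry_bdry[OF fU]) (rule chains_finite_support[OF X c(1)])
      then show "e \<in> Z i" using bdry_chains[OF X c(1)] c(2) unfolding Z_def by auto
    qed
    then have "bdry X ` chains X (Suc i) \<subseteq> RS.span W" using W(3) by auto
    then show ?thesis unfolding r_def using RS.dim_le_card[OF _ fW] W(4) by simp
  qed
  have r0: "r 0 = 0"
  proof -
    have z0: "0 \<in> chains X 0" by (rule RS.subspace_0[OF chains_subspace])
    have "bdry X ` chains X 0 \<subseteq> {0}" using bdry_chains0[OF X] by blast
    moreover have "bdry X 0 = 0" using bdry_chains0[OF X z0] .
    then have "0 \<in> bdry X ` chains X 0" using z0 by (metis image_eqI)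
    ultimately have "bdry X ` chains X 0 = {0}" by blast
    then show ?thesis unfolding r_def using dim_zero_set by simp
  qed
  have rd: "r (Suc d) = 0"
  proof -
    have "simps_of X (Suc d) = {}"
    proof (rule ccontr)
      assume "simps_of X (Suc d) \<noteq> {}"
      then obtain \<sigma> where "\<sigma> \<in> insert {} X" "card \<sigma> = Suc d" unfolding simps_of_def by blast
      then show False using bd by (cases "\<sigma> = {}") auto
    qed
    then have "chains X (Suc d) = {0}"
      using chains_eq_span[OF finX, of "Suc d"] by simp
    then have "bdry X ` chains X (Suc d) = {0}"
      using bdry_scale[of X 0 0] by (simp add: rscale_def zero_fun_def)
    then show ?thesis unfolding r_def using dim_zero_set by simp
  qed
  have "(\<Sum>i\<le>d. (-1::real)^i * real (reduced_betti X i))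
      = (\<Sum>i\<le>d. (-1::real)^i * (real (z i) - real (r (Suc i))))"
    unfolding reduced_betti_def
  proof (rule sum.cong[OF refl])
    fix i
    show "(-1::real)^i * real (RS.dim {c \<in> chains X i. bdry X c = 0} - RS.dim (bdry X ` chains X (Suc i)))
        = (-1::real)^i * (real (z i) - real (r (Suc i)))"
      using of_nat_diff[OF rz[of i]] unfolding z_def r_def Z_def by simp
  qed
  also have "\<dots> = (\<Sum>i\<le>d. (-1::real)^i * (real (z i) + real (r i)))"
    using telescope[of "\<lambda>i. real (z i)" "\<lambda>i. real (r i)" d] r0 rd by (simp only: of_nat_0 mult_zero_right diff_zero)
  also have "\<dots> = (\<Sum>i\<le>d. (-1::real)^i * real (card (simps_of X i)))"
    by (rule sum.cong[OF refl]) (simp only: rn of_nat_add)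
  finally show ?thesis .
qed



lemma topspace_realization: "topspace (realization L) = (\<Union>\<sigma>\<in>L. geom_simplex \<sigma>)"
  unfolding realization_def by simp

lemma proj_cont_E: "continuous_map (subtopology (Euclidean_space n) U) euclideanreal (\<lambda>x. x i)"
  unfolding Euclidean_space_def
  by (intro continuous_map_from_subtopology continuous_map_product_projection) simp

lemma sphere_no_open:
  assumes d: "d > 0" and op: "openin (Euclidean_space d) V" and p: "p \<in> V"
    and sub: "\<And>x. x \<in> V \<Longrightarrow> (\<Sum>i\<le>d-1. x i ^ 2) = 1"
  shows False
proof -
  let ?E = "Euclidean_space d"
  have pE: "p \<in> topspace ?E" using openin_subset[OF op] p by blast
  define m where "m s = (\<lambda>i. s * p i)" for s :: real
  have mc: "continuous_map euclideanreal ?E m"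
    unfolding Euclidean_space_def continuous_map_in_subtopology
  proof
    show "continuous_map euclideanreal (powertop_real UNIV) m"
      unfolding continuous_map_componentwise_UNIV m_def
      by (intro allI continuous_map_real_mult_right continuous_map_id[unfolded id_def])
    show "m \<in> topspace euclideanreal \<rightarrow> {x. \<forall>i\<ge>d. x i = 0}"
      using pE unfolding m_def topspace_Euclidean_space by auto
  qed
  have "openin euclideanreal {s \<in> topspace euclideanreal. m s \<in> V}"
    by (rule openin_continuous_map_preimage[OF mc op])
  then have oP: "open {s. m s \<in> V}" by simp
  have m1: "m 1 = p" unfolding m_def by simp
  obtain e where e: "e > 0" "\<And>y. dist y 1 < e \<Longrightarrow> m y \<in> V"
    using oP m1 p unfolding open_dist by force
  define s where "s = 1 + e / 2"
  have "dist s 1 < e" using e(1) unfolding s_def dist_real_def by simp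
  then have "m s \<in> V" using e(2) by blast
  then have "(\<Sum>i\<le>d-1. (s * p i) ^ 2) = 1" using sub unfolding m_def by blast
  then have "s^2 * (\<Sum>i\<le>d-1. p i ^ 2) = 1"
    by (simp add: power_mult_distrib sum_distrib_left)
  then have "s^2 = 1" using sub[OF p] by simp
  moreover have "s > 1" using e(1) unfolding s_def by simp
  then have "s^2 > 1" by (simp add: one_less_power)
  ultimately show False by simp
qed


lemma no_big_simplex:
  fixes L :: "'v set set" and \<rho> :: "'v set"
  assumes d: "d > 0" and hom: "realization L homeomorphic_space nsphere (d-1)"
    and rL: "\<rho> \<in> L" and finr: "finite \<rho>" and cr: "card \<rho> = Suc d"
  shows False
proof -
  let ?E = "Euclidean_space d"
  obtain h k where hk: "homeomorphic_maps (realization L) (nsphere (d-1)) h k"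
    using hom unfolding homeomorphic_space_def by blast
  have hc: "continuous_map (realization L) (nsphere (d-1)) h"
    and kh: "\<And>x. x \<in> topspace (realization L) \<Longrightarrow> k (h x) = x"
    using hk unfolding homeomorphic_maps_def by auto
  obtain e where e: "bij_betw e {0..<Suc d} \<rho>"
    using ex_bij_betw_nat_finite[OF finr] cr by auto
  define ie where "ie = inv_into {0..<Suc d} e"
  have ie_e: "ie (e m) = m" if "m < Suc d" for m
    unfolding ie_def using e that bij_betw_inv_into_left by fastforce
  have ie_in: "ie w < Suc d" if "w \<in> \<rho>" for w
    unfolding ie_def using e that bij_betw_inv_into[OF e] bij_betwE by fastforce
  define coord where "coord m x = (if m = 0 then 1 - (\<Sum>i<d. x i) else x (m - 1))" for m and x :: "nat \<Rightarrow> real"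
  define g where "g x = (\<lambda>w. if w \<in> \<rho> then coord (ie w) x else 0)" for x
  define U where "U = {x \<in> topspace ?E. (\<forall>i<d. 0 < x i) \<and> (\<Sum>i<d. x i) < 1}"
  have Usub: "U \<subseteq> topspace ?E" unfolding U_def by blast
  have opU: "openin ?E U"
  proof -
    have o1: "openin ?E ((\<Inter>i\<in>{..<d}. {x \<in> topspace ?E. x i \<in> {0<..}}) \<inter> topspace ?E)"
    proof (rule openin_INT)
      fix i
      show "openin ?E {x \<in> topspace ?E. x i \<in> {0<..}}"
        using openin_continuous_map_preimage[OF proj_cont_E[of d "topspace ?E" i, simplified], of "{0<..}"]
        by simp
    qed simp
    have cs: "continuous_map ?E euclideanreal (\<lambda>x. \<Sum>i<d. x i)"
      by (intro continuous_map_sum) (use proj_cont_E[of d "topspace ?E", simplified] in auto)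
    have o2: "openin ?E {x \<in> topspace ?E. (\<Sum>i<d. x i) \<in> {..<1}}"
      using openin_continuous_map_preimage[OF cs, of "{..<1}"] by simp
    have "U = ((\<Inter>i\<in>{..<d}. {x \<in> topspace ?E. x i \<in> {0<..}}) \<inter> topspace ?E) \<inter>
              {x \<in> topspace ?E. (\<Sum>i<d. x i) \<in> {..<1}}"
      unfolding U_def by auto
    then show ?thesis using o1 o2 by auto
  qed
  have gs: "g x \<in> geom_simplex \<rho>" if xU: "x \<in> U" for x
  proof -
    have pos: "\<And>i. i < d \<Longrightarrow> 0 < x i" and sl: "(\<Sum>i<d. x i) < 1" using xU unfolding U_def by auto
    have cnn: "0 \<le> coord m x" if "m < Suc d" for m
      using pos sl that unfolding coord_def by (cases m) (auto intro: less_imp_le)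
    have "(\<Sum>w\<in>\<rho>. g x w) = (\<Sum>m\<in>{0..<Suc d}. g x (e m))"
      using sum.reindex_bij_betw[OF e, of "g x"] by simp
    also have "\<dots> = (\<Sum>m<Suc d. coord m x)"
      unfolding atLeast0LessThan
    proof (rule sum.cong[OF refl])
      fix m assume "m \<in> {..<Suc d}"
      then have "m < Suc d" by simp
      moreover have "e m \<in> \<rho>" using e \<open>m < Suc d\<close> bij_betwE by fastforce
      ultimately show "g x (e m) = coord m x" unfolding g_def using ie_e by simp
    qed
    also have "\<dots> = coord 0 x + (\<Sum>i<d. coord (Suc i) x)" by (rule sum.lessThan_Suc_shift)
    also have "\<dots> = 1" unfolding coord_def by simp
    finally have s1: "sum (g x) \<rho> = 1" .
    show ?thesis unfolding geom_simplex_def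
      using s1 cnn ie_in unfolding g_def by auto
  qed
  have gc: "continuous_map (subtopology ?E U) (realization L) g"
    unfolding realization_def continuous_map_in_subtopology
  proof
    show "continuous_map (subtopology ?E U) (powertop_real UNIV) g"
      unfolding continuous_map_componentwise_UNIV
    proof
      fix w
      show "continuous_map (subtopology ?E U) euclideanreal (\<lambda>x. g x w)"
      proof (cases "w \<in> \<rho>")
        case False
        then show ?thesis unfolding g_def by simp
      next
        case True
        show ?thesis
        proof (cases "ie w = 0")
          case True
          have "continuous_map (subtopology ?E U) euclideanreal (\<lambda>x. 1 - (\<Sum>i<d. x i))"
            by (intro continuous_map_diff continuous_map_sum) (auto intro: proj_cont_E)
          then show ?thesis using \<open>w \<in> \<rho>\<close> True unfolding g_def coord_def by simp
        next
          case False
          then show ?thesis using \<open>w \<in> \<rho>\<close> proj_cont_E unfolding g_def coord_def by simp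
        qed
      qed
    qed
    show "g \<in> topspace (subtopology ?E U) \<rightarrow> (\<Union>\<sigma>\<in>L. geom_simplex \<sigma>)"
      using gs rL Usub by auto
  qed
  have ginj: "inj_on g U"
  proof
    fix x y assume xU: "x \<in> U" and yU: "y \<in> U" and gxy: "g x = g y"
    show "x = y"
    proof
      fix i
      show "x i = y i"
      proof (cases "i < d")
        case True
        then have "e (Suc i) \<in> \<rho>" using e bij_betwE by fastforce
        then have "g x (e (Suc i)) = x i" "g y (e (Suc i)) = y i"
          unfolding g_def coord_def using ie_e[of "Suc i"] True by auto
        then show ?thesis using gxy by metis
      next
        case False
        then have "d \<le> i" by simp
        then have "x i = 0" "y i = 0" using xU yU Usub unfolding topspace_Euclidean_space by blast+
        then show ?thesis by simp
      qed
    qed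
  qed
  define F where "F = h \<circ> g"
  have Fc0: "continuous_map (subtopology ?E U) (nsphere (d-1)) F"
    unfolding F_def by (rule continuous_map_compose[OF gc hc])
  have nsE: "nsphere (d-1) = subtopology ?E {x. (\<Sum>i\<le>d-1. x i ^ 2) = 1}"
    unfolding nsphere_def using d by simp
  have Fc: "continuous_map (subtopology ?E U) ?E F"
    and Fs: "\<And>x. x \<in> U \<Longrightarrow> (\<Sum>i\<le>d-1. F x i ^ 2) = 1"
    using Fc0 unfolding nsE continuous_map_in_subtopology using Usub by auto
  have Finj: "inj_on F U"
  proof
    fix x y assume "x \<in> U" "y \<in> U" "F x = F y"
    then have "k (h (g x)) = k (h (g y))" unfolding F_def by simp
    moreover have "g x \<in> topspace (realization L)" "g y \<in> topspace (realization L)"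
      using gs \<open>x \<in> U\<close> \<open>y \<in> U\<close> rL unfolding topspace_realization by auto
    ultimately have "g x = g y" using kh by metis
    then show "x = y" using ginj \<open>x \<in> U\<close> \<open>y \<in> U\<close> by (meson inj_onD)
  qed
  have opF: "openin ?E (F ` U)"
    by (rule invariance_of_domain_Euclidean_space[OF opU Fc Finj])
  define x0 where "x0 = (\<lambda>i. if i < d then 1 / (2 * real d) else 0)"
  have "(\<Sum>i<d. x0 i) = 1/2" unfolding x0_def using d by simp
  then have x0U: "x0 \<in> U" unfolding U_def topspace_Euclidean_space x0_def using d by auto
  show False
    using sphere_no_open[OF d opF, of "F x0"] x0U Fs by blast
qed



lemma sc_of_cm: "combinatorial_manifold d K \<Longrightarrow> simplicial_complex K"
  unfolding combinatorial_manifold_def by blast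

lemma link_elem:
  assumes "\<tau> \<in> link K w"
  obtains \<sigma> where "\<sigma> \<in> K" "w \<in> \<sigma>" "\<tau> \<subseteq> \<sigma>" "w \<notin> \<tau>" "\<tau> \<noteq> {}"
  using assms unfolding link_def star_def by blast

lemma link_vertices:
  assumes K: "simplicial_complex K" and t: "\<tau> \<in> link K w" and x: "x \<in> \<tau>"
  shows "x \<in> vertices K"
proof -
  obtain \<sigma> where "\<sigma> \<in> K" "\<tau> \<subseteq> \<sigma>" using link_elem[OF t] by metis
  then have "{x} \<in> K" using sc_closed[OF K, of \<sigma> "{x}"] x by blast
  then show ?thesis unfolding vertices_def by simp
qed

lemma lower_link_sc:
  assumes K: "simplicial_complex K"
  shows "simplicial_complex (lower_link K F t w)"
proof -
  have sub: "lower_link K F t w \<subseteq> (\<Union>\<sigma>\<in>K. Pow \<sigma>)"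
    unfolding lower_link_def link_def star_def by blast
  have "finite (\<Union>\<sigma>\<in>K. Pow \<sigma>)" using sc_fin[OF K] sc_simp_fin[OF K] by blast
  then have fin: "finite (lower_link K F t w)" using sub finite_subset by blast
  have ff: "finite \<tau> \<and> \<tau> \<noteq> {}" if "\<tau> \<in> lower_link K F t w" for \<tau>
  proof -
    from that have "\<tau> \<in> link K w" unfolding lower_link_def by blast
    then obtain \<sigma> where "\<sigma> \<in> K" "\<tau> \<subseteq> \<sigma>" "\<tau> \<noteq> {}" by (rule link_elem) blast
    then show ?thesis using sc_simp_fin[OF K] finite_subset by blast
  qed
  have cl: "\<rho> \<in> lower_link K F t w" if "\<tau> \<in> lower_link K F t w" "\<rho> \<subseteq> \<tau>" "\<rho> \<noteq> {}" for \<tau> \<rho>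
    using that unfolding lower_link_def link_def by blast
  show ?thesis unfolding simplicial_complex_def using fin ff cl by blast
qed

lemma geom_simplex_ne:
  assumes "finite \<tau>" "a \<in> \<tau>"
  shows "(\<lambda>i. if i = a then 1 else 0) \<in> geom_simplex \<tau>"
  using assms unfolding geom_simplex_def by (auto simp: sum.delta)

lemma link_dim_bound:
  fixes K :: "'v set set"
  assumes cm: "combinatorial_manifold d K" and w: "w \<in> vertices K" and t: "\<tau> \<in> link K w"
  shows "card \<tau> \<le> d"
proof (rule ccontr)
  assume big: "\<not> card \<tau> \<le> d"
  have K: "simplicial_complex K" using sc_of_cm[OF cm] .
  have sph: "is_sphere d (realization (link K w))" using cm w unfolding combinatorial_manifold_def by blast
  obtain \<sigma> where s: "\<sigma> \<in> K" "\<tau> \<subseteq> \<sigma>" "\<tau> \<noteq> {}" "w \<in> \<sigma>" "w \<notin> \<tau>" using link_elem[OF t] by metis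
  have ft: "finite \<tau>" using sc_simp_fin[OF K s(1)] s(2) finite_subset by blast
  show False
  proof (cases "d = 0")
    case True
    then have "topspace (realization (link K w)) = {}" using sph unfolding is_sphere_def by simp
    moreover obtain a where "a \<in> \<tau>" using s(3) by blast
    ultimately show False using geom_simplex_ne[OF ft] t unfolding topspace_realization by blast
  next
    case False
    then have d: "d > 0" by simp
    have hom: "realization (link K w) homeomorphic_space nsphere (d-1)"
      using sph False unfolding is_sphere_def by simp
    obtain \<rho> where r: "\<rho> \<subseteq> \<tau>" "card \<rho> = Suc d" "finite \<rho>"
      using obtain_subset_with_card_n[of "Suc d" \<tau>] big by auto
    have "\<rho> \<noteq> {}" using r(2) by auto
    then have "\<rho> \<in> link K w" using r(1) s unfolding link_def star_def by blast
    then show False using no_big_simplex[OF d hom _ r(3) r(2)] by blast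
  qed
qed



lemma sign_const:
  fixes \<phi> :: "real \<Rightarrow> real"
  assumes cont: "continuous_on {a..b} \<phi>" and nz: "\<forall>t\<in>{a..b}. \<phi> t \<noteq> 0"
  shows "s \<in> {a..b} \<Longrightarrow> t \<in> {a..b} \<Longrightarrow> \<phi> s < 0 \<longleftrightarrow> \<phi> t < 0"
proof -
  have main: "\<phi> s < 0 \<longleftrightarrow> \<phi> t < 0" if st: "s \<in> {a..b}" "t \<in> {a..b}" "s \<le> t" for s t
  proof -
    have c: "continuous_on {s..t} \<phi>" using continuous_on_subset[OF cont] st by auto
    have nz': "\<forall>x. s \<le> x \<and> x \<le> t \<longrightarrow> \<phi> x \<noteq> 0" using nz st by auto
    show ?thesis
    proof
      assume "\<phi> s < 0"
      show "\<phi> t < 0"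
      proof (rule ccontr)
        assume "\<not> \<phi> t < 0"
        then obtain x where "s \<le> x" "x \<le> t" "\<phi> x = 0"
          using IVT'[of \<phi> s 0 t] c \<open>\<phi> s < 0\<close> st(3) by force
        then show False using nz' by blast
      qed
    next
      assume "\<phi> t < 0"
      show "\<phi> s < 0"
      proof (rule ccontr)
        assume "\<not> \<phi> s < 0"
        then obtain x where "s \<le> x" "x \<le> t" "\<phi> x = 0"
          using IVT2'[of \<phi> t 0 s] c \<open>\<phi> t < 0\<close> st(3) by force
        then show False using nz' by blast
      qed
    qed
  qed
  assume "s \<in> {a..b}" "t \<in> {a..b}"
  then show ?thesis
  proof (cases "s \<le> t")
    case True
    then show ?thesis using main[of s t] \<open>s \<in> {a..b}\<close> \<open>t \<in> {a..b}\<close> by blast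
  next
    case False
    then have "t \<le> s" by simp
    then show ?thesis using main[of t s] \<open>s \<in> {a..b}\<close> \<open>t \<in> {a..b}\<close> by blast
  qed
qed

lemma swap_vertex:
  assumes K: "simplicial_complex K"
    and t: "\<tau> \<in> link K a" and low: "\<forall>x\<in>\<tau>. F s x \<le> F s a" and b: "b \<in> \<tau>"
    and ab: "F s' a \<le> F s' b"
    and tr: "\<And>x. x \<in> \<tau> \<Longrightarrow> x \<noteq> b \<Longrightarrow> F s x \<le> F s a \<Longrightarrow> F s' x \<le> F s' b"
  shows "insert a (\<tau> - {b}) \<in> lower_link K F s' b"
    and "card (insert a (\<tau> - {b})) = card \<tau>"
    and "insert b (insert a (\<tau> - {b}) - {a}) = \<tau>"
proof -
  obtain \<sigma> where s: "\<sigma> \<in> K" "a \<in> \<sigma>" "\<tau> \<subseteq> \<sigma>" "a \<notin> \<tau>" "\<tau> \<noteq> {}" using link_elem[OF t] by metis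
  have ba: "b \<noteq> a" using b s(4) by blast
  have "insert a (\<tau> - {b}) \<in> link K b"
    unfolding link_def star_def using s b ba by blast
  moreover have "\<forall>x\<in>insert a (\<tau> - {b}). F s' x \<le> F s' b" using ab tr low by blast
  ultimately show "insert a (\<tau> - {b}) \<in> lower_link K F s' b" unfolding lower_link_def by blast
  have ft: "finite \<tau>" using sc_simp_fin[OF K s(1)] s(3) finite_subset by blast
  have "card (insert a (\<tau> - {b})) = Suc (card (\<tau> - {b}))" using ft s(4) by simp
  also have "\<dots> = card \<tau>" using ft b by (metis card_Suc_Diff1)
  finally show "card (insert a (\<tau> - {b})) = card \<tau>" .
  show "insert b (insert a (\<tau> - {b}) - {a}) = \<tau>" using b s(4) by blast
qed


theorem theorem1:
  fixes K :: "'v::linorder set set" and F :: "real \<Rightarrow> 'v \<Rightarrow> real"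
    and d :: nat and u v :: 'v and t1 t2 :: real
  assumes "combinatorial_manifold d K"
    and "generic_family K F"
    and "u \<in> vertices K" and "v \<in> vertices K" and "u \<noteq> v"
    and "0 \<le> t1" and "t1 < t2" and "t2 \<le> 1"
    and "F t1 v > F t1 u" and "F t2 v < F t2 u"
    and "\<exists>!t. t1 < t \<and> t < t2 \<and> F t u = F t v"
    and "\<forall>t\<in>{t1..t2}. \<forall>a\<in>vertices K. \<forall>b\<in>vertices K.
           a \<noteq> b \<and> F t a = F t b \<longrightarrow> {a, b} = {u, v}"
  shows "(\<Sum>i\<le>d. (-1::real) ^ i * (real (betti_t K F t2 v i) - real (betti_t K F t1 v i)))
       = - (\<Sum>i\<le>d. (-1::real) ^ i * (real (betti_t K F t2 u i) - real (betti_t K F t1 u i)))"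
proof -
  note cm = assms(1)
  have K: "simplicial_complex K" using sc_of_cm[OF cm] .
  have cont: "\<And>w. w \<in> vertices K \<Longrightarrow> continuous_on {0..1} (\<lambda>t. F t w)"
    using assms(2) unfolding generic_family_def PL_family_def by blast
  obtain ts where ts: "t1 < ts" "ts < t2" "F ts u = F ts v" using assms(11) by blast
  have sub: "{t1..t2} \<subseteq> {0..1}" using assms(6,8) by auto
  have sgn: "F s a - F s b < 0 \<longleftrightarrow> F t a - F t b < 0"
    if ab: "a \<in> vertices K" "b \<in> vertices K" "a \<noteq> b" "{a, b} \<noteq> {u, v}"
      and st: "s \<in> {t1..t2}" "t \<in> {t1..t2}" for a b s t
  proof (rule sign_const[OF _ _ st])
    show "continuous_on {t1..t2} (\<lambda>t. F t a - F t b)"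
      using continuous_on_subset[OF continuous_on_diff[OF cont[OF ab(1)] cont[OF ab(2)]] sub] .
    show "\<forall>t\<in>{t1..t2}. F t a - F t b \<noteq> 0" using assms(12) ab by auto
  qed
  define Q where "Q x \<longleftrightarrow> F ts x < F ts v" for x
  have tsI: "ts \<in> {t1..t2}" using ts by auto
  have P: "(F s x \<le> F s v \<longleftrightarrow> Q x) \<and> (F s x \<le> F s u \<longleftrightarrow> Q x)"
    if x: "x \<in> vertices K" "x \<noteq> u" "x \<noteq> v" and s: "s \<in> {t1..t2}" for x s
  proof -
    have d1: "{x, v} \<noteq> {u, v}" using x by (metis doubleton_eq_iff)
    have d2: "{x, u} \<noteq> {u, v}" using x by (metis doubleton_eq_iff)
    have ne1: "F s x \<noteq> F s v" using assms(12) s x(1) assms(4) x(3) d1 by blast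
    have ne2: "F s x \<noteq> F s u" using assms(12) s x(1) assms(3) x(2) d2 by blast
    have e1: "F s x - F s v < 0 \<longleftrightarrow> F ts x - F ts v < 0"
      using sgn[OF x(1) assms(4) x(3) d1 s tsI] .
    have e2: "F s x - F s u < 0 \<longleftrightarrow> F ts x - F ts u < 0"
      using sgn[OF x(1) assms(3) x(2) d2 s tsI] .
    show ?thesis using e1 e2 ne1 ne2 ts(3) unfolding Q_def by auto
  qed
  have t1I: "t1 \<in> {t1..t2}" and t2I: "t2 \<in> {t1..t2}" using assms(7) by auto
  define L1v where "L1v = lower_link K F t1 v"
  define L2v where "L2v = lower_link K F t2 v"
  define L1u where "L1u = lower_link K F t1 u"
  define L2u where "L2u = lower_link K F t2 u"
  have lv: "x \<in> vertices K" "x \<noteq> w" if "\<tau> \<in> link K w" "x \<in> \<tau>" for \<tau> w x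
    using link_vertices[OF K that] link_elem[OF that(1)] that(2) by blast+
  have eL2v: "L2v = {\<tau>\<in>L1v. u \<notin> \<tau>}"
  proof -
    have "(\<forall>x\<in>\<tau>. F t2 x \<le> F t2 v) \<longleftrightarrow> u \<notin> \<tau> \<and> (\<forall>x\<in>\<tau>. F t1 x \<le> F t1 v)"
      if t: "\<tau> \<in> link K v" for \<tau>
    proof -
      have "F t2 x \<le> F t2 v \<longleftrightarrow> F t1 x \<le> F t1 v" if "x \<in> \<tau>" "x \<noteq> u" for x
        using P[OF lv(1)[OF t that(1)] that(2) lv(2)[OF t that(1)] t1I]
              P[OF lv(1)[OF t that(1)] that(2) lv(2)[OF t that(1)] t2I] by blast
      then show ?thesis using assms(9,10) by force
    qed
    then show ?thesis unfolding L2v_def L1v_def lower_link_def by blast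
  qed
  have eL1u: "L1u = {\<tau>\<in>L2u. v \<notin> \<tau>}"
  proof -
    have "(\<forall>x\<in>\<tau>. F t1 x \<le> F t1 u) \<longleftrightarrow> v \<notin> \<tau> \<and> (\<forall>x\<in>\<tau>. F t2 x \<le> F t2 u)"
      if t: "\<tau> \<in> link K u" for \<tau>
    proof -
      have "F t2 x \<le> F t2 u \<longleftrightarrow> F t1 x \<le> F t1 u" if "x \<in> \<tau>" "x \<noteq> v" for x
        using P[OF lv(1)[OF t that(1)] lv(2)[OF t that(1)] that(2) t1I]
              P[OF lv(1)[OF t that(1)] lv(2)[OF t that(1)] that(2) t2I] by blast
      then show ?thesis using assms(9,10) by force
    qed
    then show ?thesis unfolding L2u_def L1u_def lower_link_def by blast
  qed
  define A where "A j = {\<tau>\<in>L1v. u \<in> \<tau> \<and> card \<tau> = j}" for j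
  define B where "B j = {\<tau>\<in>L2u. v \<in> \<tau> \<and> card \<tau> = j}" for j
  have finL: "finite L1v" "finite L2u"
    unfolding L1v_def L2u_def using lower_link_sc[OF K] sc_fin by blast+
  have c1: "card (simps_of L1v j) = card (simps_of L2v j) + card (A j)" for j
  proof -
    have "simps_of L1v j = simps_of L2v j \<union> A j"
      unfolding simps_of_def A_def eL2v by blast
    moreover have "simps_of L2v j \<inter> A j = {}"
      unfolding simps_of_def A_def eL2v by blast
    moreover have "simps_of L2v j \<subseteq> simps_of L1v j" "A j \<subseteq> simps_of L1v j"
      unfolding simps_of_def A_def eL2v by blast+
    then have "finite (simps_of L2v j)" "finite (A j)"
      using finite_simps_of[OF finL(1), of j] finite_subset by blast+
    ultimately show ?thesis by (simp add: card_Un_disjoint)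
  qed
  have c2: "card (simps_of L2u j) = card (simps_of L1u j) + card (B j)" for j
  proof -
    have "simps_of L2u j = simps_of L1u j \<union> B j"
      unfolding simps_of_def B_def eL1u by blast
    moreover have "simps_of L1u j \<inter> B j = {}"
      unfolding simps_of_def B_def eL1u by blast
    moreover have "simps_of L1u j \<subseteq> simps_of L2u j" "B j \<subseteq> simps_of L2u j"
      unfolding simps_of_def B_def eL1u by blast+
    then have "finite (simps_of L1u j)" "finite (B j)"
      using finite_simps_of[OF finL(2), of j] finite_subset by blast+
    ultimately show ?thesis by (simp add: card_Un_disjoint)
  qed
  have cAB: "card (A j) = card (B j)" for j
  proof -
    define f where "f \<tau> = insert v (\<tau> - {u})" for \<tau>
    define f' where "f' \<tau> = insert u (\<tau> - {v})" for \<tau>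
    have fA: "f \<tau> \<in> B j \<and> f' (f \<tau>) = \<tau>" if t: "\<tau> \<in> A j" for \<tau>
    proof -
      have tl: "\<tau> \<in> link K v" "\<forall>x\<in>\<tau>. F t1 x \<le> F t1 v" "u \<in> \<tau>" "card \<tau> = j"
        using t unfolding A_def L1v_def lower_link_def by auto
      have tr: "F t2 x \<le> F t2 u" if "x \<in> \<tau>" "x \<noteq> u" "F t1 x \<le> F t1 v" for x
        using P[OF lv(1)[OF tl(1) that(1)] that(2) lv(2)[OF tl(1) that(1)] t1I]
              P[OF lv(1)[OF tl(1) that(1)] that(2) lv(2)[OF tl(1) that(1)] t2I] that(3) by blast
      have ab: "F t2 v \<le> F t2 u" using assms(10) by simp
      note sw = swap_vertex[OF K tl(1) tl(2) tl(3) ab tr]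
      show ?thesis using sw tl(4) unfolding f_def f'_def B_def L2u_def by auto
    qed
    have fB: "f' \<sigma> \<in> A j \<and> f (f' \<sigma>) = \<sigma>" if t: "\<sigma> \<in> B j" for \<sigma>
    proof -
      have tl: "\<sigma> \<in> link K u" "\<forall>x\<in>\<sigma>. F t2 x \<le> F t2 u" "v \<in> \<sigma>" "card \<sigma> = j"
        using t unfolding B_def L2u_def lower_link_def by auto
      have tr: "F t1 x \<le> F t1 v" if "x \<in> \<sigma>" "x \<noteq> v" "F t2 x \<le> F t2 u" for x
        using P[OF lv(1)[OF tl(1) that(1)] lv(2)[OF tl(1) that(1)] that(2) t1I]
              P[OF lv(1)[OF tl(1) that(1)] lv(2)[OF tl(1) that(1)] that(2) t2I] that(3) by blast
      have ab: "F t1 u \<le> F t1 v" using assms(9) by simp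
      note sw = swap_vertex[OF K tl(1) tl(2) tl(3) ab tr]
      show ?thesis using sw tl(4) unfolding f_def f'_def A_def L1v_def by auto
    qed
    have "bij_betw f (A j) (B j)"
      by (rule bij_betw_byWitness[where f'=f']) (use fA fB in auto)
    then show ?thesis by (rule bij_betw_same_card)
  qed
  have bd: "\<forall>\<sigma>\<in>lower_link K F t w. card \<sigma> \<le> d" if "w \<in> vertices K" for t w
    using link_dim_bound[OF cm that] unfolding lower_link_def by blast
  have EP: "(\<Sum>i\<le>d. (-1::real)^i * real (betti_t K F t w i))
      = (\<Sum>i\<le>d. (-1::real)^i * real (card (simps_of (lower_link K F t w) i)))"
    if "w \<in> vertices K" for t w
    unfolding betti_t_def by (rule euler_poincare[OF lower_link_sc[OF K] bd[OF that]])
  have split: "(\<Sum>i\<le>d. (-1::real) ^ i * (real (a i) - real (b i)))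
      = (\<Sum>i\<le>d. (-1::real)^i * real (a i)) - (\<Sum>i\<le>d. (-1::real)^i * real (b i))" for a b :: "nat \<Rightarrow> nat"
    by (simp add: right_diff_distrib sum_subtractf)
  have lhs: "(\<Sum>i\<le>d. (-1::real) ^ i * (real (betti_t K F t2 v i) - real (betti_t K F t1 v i)))
      = - (\<Sum>i\<le>d. (-1::real)^i * real (card (A i)))"
  proof -
    have "(\<Sum>i\<le>d. (-1::real) ^ i * (real (betti_t K F t2 v i) - real (betti_t K F t1 v i)))
      = (\<Sum>i\<le>d. (-1::real)^i * real (card (simps_of L2v i))) - (\<Sum>i\<le>d. (-1::real)^i * real (card (simps_of L1v i)))"
      unfolding split EP[OF assms(4)] L1v_def L2v_def ..
    also have "\<dots> = - (\<Sum>i\<le>d. (-1::real)^i * real (card (A i)))"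
      unfolding c1 by (simp add: distrib_left sum.distrib)
    finally show ?thesis .
  qed
  have rhs: "(\<Sum>i\<le>d. (-1::real) ^ i * (real (betti_t K F t2 u i) - real (betti_t K F t1 u i)))
      = (\<Sum>i\<le>d. (-1::real)^i * real (card (B i)))"
  proof -
    have "(\<Sum>i\<le>d. (-1::real) ^ i * (real (betti_t K F t2 u i) - real (betti_t K F t1 u i)))
      = (\<Sum>i\<le>d. (-1::real)^i * real (card (simps_of L2u i))) - (\<Sum>i\<le>d. (-1::real)^i * real (card (simps_of L1u i)))"
      unfolding split EP[OF assms(3)] L1u_def L2u_def ..
    also have "\<dots> = (\<Sum>i\<le>d. (-1::real)^i * real (card (B i)))"
      unfolding c2 by (simp add: distrib_left sum.distrib)
    finally show ?thesis .
  qed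
  show ?thesis unfolding lhs rhs cAB ..
qed


end
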